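(* Let $T\colon(B_1,S_1)\to(B_2,S_2)$ be a morphism of $\mathsf{SubS5^S}$. Then $T$ is a morphism of $\mathsf{SubS5^F}$ (i.e.\ $T^\dagger\circ T\subseteq S_1$ and $S_2\subseteq T\circ T^\dagger$) if and only if both of the following hold: (1) for all $a\in B_1$, $a\mathrel{T}0$ implies $a=0$; (2) for all $b_1,b_2\in B_2$ with $b_1\mathrel{S_2}b_2$ there is $a\in B_1$ with $\neg a\mathrel{T}\neg b_1$ and $a\mathrel{T}b_2$.
   Context: A subordination $S\colon A\to B$ between boolean algebras is a relation with (S1) $0\mathrel{S}0$, $1\mathrel{S}1$; (S2) $a,b\mathrel{S}c\Rightarrow(a\vee b)\mathrel{S}c$; (S3) $a\mathrel{S}c,d\Rightarrow a\mathrel{S}(c\wedge d)$; (S4) $a\le b\mathrel{S}c\le d\Rightarrow a\mathrel{S}d$. An $\mathsf{S5}$-subordination on $B$ additionally satisfies (S5) $a\mathrel{S}b\Rightarrow a\le b$; (S6) $a\mathrel{S}b\Rightarrow\neg b\mathrel{S}\neg a$; (S7) $a\mathrel{S}b\Rightarrow\exists c\,(a\mathrel{S}c\mathrel{S}b)$. $\mathsf{SubS5^S}$: objects $(B,S)$ with $S$ an $\mathsf{S5}$-subordination; morphisms $(B,S)\to(B',S')$ subordinations $T$ with $T\circ S=T=S'\circ T$; identity $S$; relational composition ($a\mathrel{(T_2\circ T_1)}c$ iff $\exists b$, $a\mathrel{T_1}b\mathrel{T_2}c$). For $T\colon B_1\to B_2$, $T^\dagger\colon B_2\to B_1$ is given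 by $b\mathrel{T^\dagger}a\iff\neg a\mathrel{T}\neg b$. $\mathsf{SubS5^F}$ is the wide subcategory of $\mathsf{SubS5^S}$ whose morphisms $T\colon(B_1,S_1)\to(B_2,S_2)$ satisfy $T^\dagger\circ T\subseteq S_1$ and $S_2\subseteq T\circ T^\dagger$. *)

theory Defs
  imports Main
begin

text \<open>Boolean algebras are modelled by the type class boolean_algebra; 0 is bot, 1 is top,
  negation is uminus. A relation from A to B is a predicate of type A \<Rightarrow> B \<Rightarrow> bool.\<close>

definition subordination :: "('a::boolean_algebra \<Rightarrow> 'b::boolean_algebra \<Rightarrow> bool) \<Rightarrow> bool" where
  "subordination S \<longleftrightarrow>
     S bot bot \<and> S top top \<and>
     (\<forall>a b c. S a c \<and> S b c \<longrightarrow> S (sup a b) c) \<and>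
     (\<forall>a c d. S a c \<and> S a d \<longrightarrow> S a (inf c d)) \<and>
     (\<forall>a b c d. a \<le> b \<and> S b c \<and> c \<le> d \<longrightarrow> S a d)"

definition S5_subordination :: "('a::boolean_algebra \<Rightarrow> 'a \<Rightarrow> bool) \<Rightarrow> bool" where
  "S5_subordination S \<longleftrightarrow>
     subordination S \<and>
     (\<forall>a b. S a b \<longrightarrow> a \<le> b) \<and>
     (\<forall>a b. S a b \<longrightarrow> S (- b) (- a)) \<and>
     (\<forall>a b. S a b \<longrightarrow> (\<exists>c. S a c \<and> S c b))"

text \<open>Relational composition in the paper's order: rcomp T2 T1 = T2 \<circ> T1 (first T1, then T2).\<close>
definition rcomp :: "('b \<Rightarrow> 'c \<Rightarrow> bool) \<Rightarrow> ('a \<Rightarrow> 'b \<Rightarrow> bool) \<Rightarrow> ('a \<Rightarrow> 'c \<Rightarrow> bool)" where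
  "rcomp T2 T1 = (\<lambda>a c. \<exists>b. T1 a b \<and> T2 b c)"

definition dagger :: "('a::boolean_algebra \<Rightarrow> 'b::boolean_algebra \<Rightarrow> bool) \<Rightarrow> ('b \<Rightarrow> 'a \<Rightarrow> bool)" where
  "dagger T = (\<lambda>b a. T (- a) (- b))"

definition SubS5S_morphism ::
  "('a::boolean_algebra \<Rightarrow> 'a \<Rightarrow> bool) \<Rightarrow> ('b::boolean_algebra \<Rightarrow> 'b \<Rightarrow> bool) \<Rightarrow> ('a \<Rightarrow> 'b \<Rightarrow> bool) \<Rightarrow> bool" where
  "SubS5S_morphism S1 S2 T \<longleftrightarrow>
     S5_subordination S1 \<and> S5_subordination S2 \<and> subordination T \<and>
     rcomp T S1 = T \<and> rcomp S2 T = T"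

definition SubS5F_morphism ::
  "('a::boolean_algebra \<Rightarrow> 'a \<Rightarrow> bool) \<Rightarrow> ('b::boolean_algebra \<Rightarrow> 'b \<Rightarrow> bool) \<Rightarrow> ('a \<Rightarrow> 'b \<Rightarrow> bool) \<Rightarrow> bool" where
  "SubS5F_morphism S1 S2 T \<longleftrightarrow>
     SubS5S_morphism S1 S2 T \<and>
     (\<forall>a a'. rcomp (dagger T) T a a' \<longrightarrow> S1 a a') \<and>
     (\<forall>b b'. S2 b b' \<longrightarrow> rcomp T (dagger T) b b')"

end

theory Submission
  imports Defs
begin

theorem lemma6p5:
  fixes S1 :: "'a::boolean_algebra \<Rightarrow> 'a \<Rightarrow> bool"
    and S2 :: "'b::boolean_algebra \<Rightarrow> 'b \<Rightarrow> bool"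
    and T :: "'a \<Rightarrow> 'b \<Rightarrow> bool"
  assumes "SubS5S_morphism S1 S2 T"
  shows "SubS5F_morphism S1 S2 T \<longleftrightarrow>
           ((\<forall>a. T a bot \<longrightarrow> a = bot) \<and>
            (\<forall>b1 b2. S2 b1 b2 \<longrightarrow> (\<exists>a. T (- a) (- b1) \<and> T a b2)))"
proof -
  have S1: "S5_subordination S1" and Tsub: "subordination T" and TS1: "rcomp T S1 = T"
    using assms unfolding SubS5S_morphism_def by auto
  have T1: "T top top" using Tsub unfolding subordination_def by simp
  have T3: "\<And>a c d. T a c \<Longrightarrow> T a d \<Longrightarrow> T a (inf c d)"
    using Tsub unfolding subordination_def by simp
  have T4: "\<And>a b c d. a \<le> b \<Longrightarrow> T b c \<Longrightarrow> c \<le> d \<Longrightarrow> T a d"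
    using Tsub unfolding subordination_def by metis
  have S4: "\<And>a b c d. a \<le> b \<Longrightarrow> S1 b c \<Longrightarrow> c \<le> d \<Longrightarrow> S1 a d"
    using S1 unfolding S5_subordination_def subordination_def by metis
  have S5: "\<And>a b. S1 a b \<Longrightarrow> a \<le> b" using S1 unfolding S5_subordination_def by simp
  have S6: "\<And>a b. S1 a b \<Longrightarrow> S1 (- b) (- a)" using S1 unfolding S5_subordination_def by simp
  have TS: "\<And>a b. T a b \<Longrightarrow> \<exists>c. S1 a c \<and> T c b"
  proof -
    fix a b assume "T a b"
    then have "rcomp T S1 a b" using TS1 by simp
    then show "\<exists>c. S1 a c \<and> T c b" unfolding rcomp_def by simp
  qed
  have eqv: "(\<forall>a a'. rcomp (dagger T) T a a' \<longrightarrow> S1 a a') \<longleftrightarrow> (\<forall>a. T a bot \<longrightarrow> a = bot)"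
  proof
    assume H: "\<forall>a a'. rcomp (dagger T) T a a' \<longrightarrow> S1 a a'"
    show "\<forall>a. T a bot \<longrightarrow> a = bot"
    proof (intro allI impI)
      fix a assume "T a bot"
      then have "rcomp (dagger T) T a bot" using T1 unfolding rcomp_def dagger_def by auto
      then have "S1 a bot" using H by blast
      then show "a = bot" using S5 bot_unique by blast
    qed
  next
    assume H: "\<forall>a. T a bot \<longrightarrow> a = bot"
    show "\<forall>a a'. rcomp (dagger T) T a a' \<longrightarrow> S1 a a'"
    proof (intro allI impI)
      fix a a' assume "rcomp (dagger T) T a a'"
      then obtain b where b1: "T a b" and b2: "T (- a') (- b)" unfolding rcomp_def dagger_def by auto
      obtain c where c1: "S1 a c" and c2: "T c b" using TS[OF b1] by blast
      obtain d where d1: "S1 (- a') d" and d2: "T d (- b)" using TS[OF b2] by blast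
      have "T (inf c d) b" using T4[OF _ c2] by simp
      moreover have "T (inf c d) (- b)" using T4[OF _ d2] by simp
      ultimately have "T (inf c d) (inf b (- b))" by (rule T3)
      then have "inf c d = bot" using H by simp
      then have cd: "c \<le> - d" by (simp add: inf_shunt)
      have "S1 (- d) a'" using S6[OF d1] by simp
      moreover have "S1 a (- d)" using S4[OF order_refl c1 cd] .
      ultimately show "S1 a a'" by (meson S4 S5 order_refl)
    qed
  qed
  have eq2: "(\<forall>b b'. S2 b b' \<longrightarrow> rcomp T (dagger T) b b') \<longleftrightarrow>
     (\<forall>b1 b2. S2 b1 b2 \<longrightarrow> (\<exists>a. T (- a) (- b1) \<and> T a b2))"
    unfolding rcomp_def dagger_def by simp
  show ?thesis unfolding SubS5F_morphism_def eqv eq2 using assms by simp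
qed

end
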